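(* Let $G(n,n_1,\dots,n_L,p_1,\dots,p_L)$ be a multi-layer stochastic block model network satisfying the standing assumptions below, let $\mathcal{L}$ be its set of layers, fix a target layer $l^*\in\mathcal{L}$ and let $\mathcal{L}'=\mathcal{L}\setminus\{l^*\}$. If a suitable reducing method is applied to all communities of the layers in $\mathcal{L}'$, then the (expected) modularity of the partition $l^*$ increases.
   Context: Multi-layer stochastic block model $G(n,n_1,\dots,n_L,p_1,\dots,p_L)$: a random graph on $n$ nodes with $L$ layers. For each layer $l$ the nodes are partitioned into $n_l$ planted communities of size $s_l=n/n_l$; independently for each layer, each pair of nodes in a common community of layer $l$ receives an edge from layer $l$ with probability $p_l$; the graph is the simple union of all generated edges. The layers' partitions are independent, a pair of nodes lying in a common community of layer $l$ with probability $1/n_l$ independently over layers (self-pairs allowed for convenience); for $k\ge2$ distinct layers and one community from each, the intersection has $n/(n_{l_1}\cdots n_{l_k})$ nodes in expectation. Standing assumptions: $n_l\ge4$, $p_l\in[0.05,1]$, $n\ge2\prod_l n_l$. Notation: for $T\subseteq\mathcal{L}$, $P(T)=1-\prod_{l\in T}(1-p_l)$ is the probability that some layer in $T$ generates an edge on a pair internal to all layers of $T$ (with $P(\emptyset)=0$). A reducing method applied to the layers of $\mathcal{L}'$ is described by $K:2^{\mathcal{L}'}\to[0,1]$, where $K(T)$ is the probability that an edge on a pair of nodes internal to exactly the layers $T$ among $\mathcal{L}'$ is kept; it is called suitable if for all $T,T'\subseteq\mathcal{L}'$, $P(T)\le P(T')$ implies $K(T)\ge K(T')$. Modularity of layer $l^*$: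 with $e$ edges, $Q=\sum_i\big(\frac{e^i_{in}}{e}-(\frac{d^i}{2e})^2\big)$ over communities $i$ of $l^*$, $e^i_{in}$ the internal edges, $e^i_{out}$ the edges with exactly one endpoint in $i$, $d^i=2e^i_{in}+e^i_{out}$, all counts replaced by their expected values. *)

theory Defs
  imports Main "HOL.Real"
begin

text \<open>P(T) = 1 - prod (1 - p_l): probability that some layer of T generates an edge
  on a pair internal to all layers of T (P of the empty set is 0).\<close>
definition Pun :: "('l \<Rightarrow> real) \<Rightarrow> 'l set \<Rightarrow> real" where
  "Pun p T = 1 - (\<Prod>l\<in>T. 1 - p l)"

text \<open>Probability that a pair of nodes lies in a common community of exactly the
  layers T among the layers A (independent layers, probability 1/n_l each).\<close>
definition exact_prob :: "('l \<Rightarrow> nat) \<Rightarrow> 'l set \<Rightarrow> 'l set \<Rightarrow> real" where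
  "exact_prob nl A T = (\<Prod>l\<in>T. 1 / real (nl l)) * (\<Prod>l\<in>A - T. 1 - 1 / real (nl l))"

definition suitable :: "('l \<Rightarrow> real) \<Rightarrow> 'l set \<Rightarrow> ('l set \<Rightarrow> real) \<Rightarrow> bool" where
  "suitable p A K \<longleftrightarrow> (\<forall>T\<subseteq>A. 0 \<le> K T \<and> K T \<le> 1) \<and>
     (\<forall>T\<subseteq>A. \<forall>T'\<subseteq>A. Pun p T \<le> Pun p T' \<longrightarrow> K T' \<le> K T)"

text \<open>A pair internal to
  community i of ls and to exactly the layers T of Ls - {ls} has an edge with
  probability Pun p (insert ls T) and it is kept with probability K T.
  (Unordered pairs, self-pairs allowed: n^2/2 pairs.)\<close>
definition exp_ein ::
  "nat \<Rightarrow> ('l \<Rightarrow> nat) \<Rightarrow> ('l \<Rightarrow> real) \<Rightarrow> 'l set \<Rightarrow> 'l \<Rightarrow> ('l set \<Rightarrow> real) \<Rightarrow> nat \<Rightarrow> real" where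
  "exp_ein n nl p Ls ls K i =
     (real n ^ 2 / 2) * (1 / real (nl ls)) ^ 2 *
     (\<Sum>T\<in>Pow (Ls - {ls}). exact_prob nl (Ls - {ls}) T * Pun p (insert ls T) * K T)"

definition exp_eout ::
  "nat \<Rightarrow> ('l \<Rightarrow> nat) \<Rightarrow> ('l \<Rightarrow> real) \<Rightarrow> 'l set \<Rightarrow> 'l \<Rightarrow> ('l set \<Rightarrow> real) \<Rightarrow> nat \<Rightarrow> real" where
  "exp_eout n nl p Ls ls K i =
     real n ^ 2 * (1 / real (nl ls)) * (1 - 1 / real (nl ls)) *
     (\<Sum>T\<in>Pow (Ls - {ls}). exact_prob nl (Ls - {ls}) T * Pun p T * K T)"

text \<open>Expected total number of edges: internal edges of all communities of ls plus
  the edges between communities (each counted from both sides).\<close>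
definition exp_edges ::
  "nat \<Rightarrow> ('l \<Rightarrow> nat) \<Rightarrow> ('l \<Rightarrow> real) \<Rightarrow> 'l set \<Rightarrow> 'l \<Rightarrow> ('l set \<Rightarrow> real) \<Rightarrow> real" where
  "exp_edges n nl p Ls ls K =
     (\<Sum>i<nl ls. exp_ein n nl p Ls ls K i + exp_eout n nl p Ls ls K i / 2)"

definition modularity ::
  "nat \<Rightarrow> ('l \<Rightarrow> nat) \<Rightarrow> ('l \<Rightarrow> real) \<Rightarrow> 'l set \<Rightarrow> 'l \<Rightarrow> ('l set \<Rightarrow> real) \<Rightarrow> real" where
  "modularity n nl p Ls ls K =
     (let e = exp_edges n nl p Ls ls K in
      \<Sum>i<nl ls. exp_ein n nl p Ls ls K i / e
        - ((2 * exp_ein n nl p Ls ls K i + exp_eout n nl p Ls ls K i) / (2 * e)) ^ 2)"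

end

theory Submission
  imports Defs
begin

lemma cheb:
  fixes w K P :: "'a \<Rightarrow> real"
  assumes "finite S" "\<forall>x\<in>S. 0 \<le> w x"
    and "\<forall>x\<in>S. \<forall>y\<in>S. (K x - K y) * (P x - P y) \<le> 0"
  shows "(\<Sum>x\<in>S. w x) * (\<Sum>x\<in>S. w x * K x * P x) \<le> (\<Sum>x\<in>S. w x * K x) * (\<Sum>x\<in>S. w x * P x)"
proof -
  have le: "(\<Sum>x\<in>S. \<Sum>y\<in>S. w x * w y * ((K x - K y) * (P x - P y))) \<le> 0"
    by (rule sum_nonpos, rule sum_nonpos) (use assms in \<open>auto intro: mult_nonneg_nonpos\<close>)
  have eq: "(\<Sum>x\<in>S. \<Sum>y\<in>S. w x * w y * ((K x - K y) * (P x - P y)))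
     = 2 * ((\<Sum>x\<in>S. w x) * (\<Sum>x\<in>S. w x * K x * P x) - (\<Sum>x\<in>S. w x * K x) * (\<Sum>x\<in>S. w x * P x))"
  proof -
    have t: "w x * w y * ((K x - K y) * (P x - P y)) =
      ((w x * K x * P x) * w y + w x * (w y * K y * P y)) - ((w x * K x) * (w y * P y) + (w x * P x) * (w y * K y))" for x y
      by (simp add: algebra_simps)
    have "(\<Sum>x\<in>S. \<Sum>y\<in>S. w x * w y * ((K x - K y) * (P x - P y)))
      = ((\<Sum>x\<in>S. \<Sum>y\<in>S. (w x * K x * P x) * w y) + (\<Sum>x\<in>S. \<Sum>y\<in>S. w x * (w y * K y * P y)))
        - ((\<Sum>x\<in>S. \<Sum>y\<in>S. (w x * K x) * (w y * P y)) + (\<Sum>x\<in>S. \<Sum>y\<in>S. (w x * P x) * (w y * K y)))"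
      unfolding t sum_subtractf sum.distrib by (rule refl)
    also have "\<dots> = ((\<Sum>x\<in>S. w x * K x * P x) * (\<Sum>x\<in>S. w x) + (\<Sum>x\<in>S. w x) * (\<Sum>x\<in>S. w x * K x * P x))
        - ((\<Sum>x\<in>S. w x * K x) * (\<Sum>x\<in>S. w x * P x) + (\<Sum>x\<in>S. w x * P x) * (\<Sum>x\<in>S. w x * K x))"
      unfolding sum_product by (rule refl)
    also have "\<dots> = 2 * ((\<Sum>x\<in>S. w x) * (\<Sum>x\<in>S. w x * K x * P x) - (\<Sum>x\<in>S. w x * K x) * (\<Sum>x\<in>S. w x * P x))"
      by (simp add: algebra_simps)
    finally show ?thesis .
  qed
  have "2 * ((\<Sum>x\<in>S. w x) * (\<Sum>x\<in>S. w x * K x * P x) - (\<Sum>x\<in>S. w x * K x) * (\<Sum>x\<in>S. w x * P x)) \<le> 0"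
    using le unfolding eq .
  then show ?thesis by (simp only: mult_le_0_iff) simp
qed

lemma modform:
  fixes c N A B ein eout e Q :: real
  assumes "c > 0" "N > 0" "ein = c * (1/N)^2 * A" "eout = 2 * c * (1/N) * (1 - 1/N) * B"
    "e = N * (ein + eout / 2)" "e > 0"
    "Q = N * (ein / e - ((2 * ein + eout) / (2 * e))^2)"
  shows "Q = A / (A + (N - 1) * B) - 1 / N" and "A + (N - 1) * B > 0"
proof -
  have e1: "N * ein = c / N * A" using assms(2,3) by (simp add: power2_eq_square)
  have e2: "N * eout / 2 = c / N * ((N - 1) * B)" using assms(2,4) by (simp add: field_simps)
  have e: "e = c / N * (A + (N - 1) * B)" using assms(5) e1 e2 by (simp add: distrib_left)
  have D: "A + (N - 1) * B > 0" using e assms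
    by (metis divide_pos_pos mult_pos_pos zero_less_mult_pos)
  then show "A + (N - 1) * B > 0" .
  have "2 * ein + eout = 2 * e / N" using assms(2,5) by (simp add: field_simps)
  then have h: "(2 * ein + eout) / (2 * e) = 1 / N"
    using assms(6) by simp
  have "Q = N * (ein / e - (1 / N)^2)" unfolding assms(7) h by (rule refl)
  also have "\<dots> = N * (ein / e) - N * (1 / N)^2" by (rule right_diff_distrib)
  also have "N * (1 / N)^2 = 1 / N" using assms(2) by (simp add: power2_eq_square)
  finally have "Q = N * (ein / e) - 1 / N" .
  moreover have "N * (ein / e) = A / (A + (N - 1) * B)"
  proof -
    have "N * ein = c / N * A" using assms(2,3) by (simp add: power2_eq_square)
    then have "N * (ein / e) = (c / N * A) / (c / N * (A + (N - 1) * B))"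
      unfolding e[symmetric] by simp
    also have "\<dots> = A / (A + (N - 1) * B)" using assms(1,2) by simp
    finally show ?thesis .
  qed
  ultimately show "Q = A / (A + (N - 1) * B) - 1 / N" by simp
qed

theorem theorem16:
  fixes n :: nat and nl :: "'l \<Rightarrow> nat" and p :: "'l \<Rightarrow> real"
    and Ls :: "'l set" and ls :: 'l and K :: "'l set \<Rightarrow> real"
  assumes "finite Ls" and "ls \<in> Ls"
    and "\<forall>l\<in>Ls. nl l \<ge> 4"
    and "\<forall>l\<in>Ls. 0.05 \<le> p l \<and> p l \<le> 1"
    and "\<forall>l\<in>Ls. nl l dvd n"
    and "n \<ge> 2 * (\<Prod>l\<in>Ls. nl l)"
    and "suitable p (Ls - {ls}) K"
    and "exp_edges n nl p Ls ls K > 0"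
  shows "modularity n nl p Ls ls K \<ge> modularity n nl p Ls ls (\<lambda>_. 1)"
proof -
  define A0 where "A0 = Ls - {ls}"
  define S where "S = Pow A0"
  define w where "w T = exact_prob nl A0 T" for T
  define P where "P T = Pun p T" for T
  define N where "N = real (nl ls)"
  define pl where "pl = p ls"
  define c where "c = real n ^ 2 / 2"
  define AK where "AK = (\<Sum>T\<in>S. w T * Pun p (insert ls T) * K T)"
  define BK where "BK = (\<Sum>T\<in>S. w T * P T * K T)"
  define WK where "WK = (\<Sum>T\<in>S. w T * K T)"
  define A1 where "A1 = (\<Sum>T\<in>S. w T * Pun p (insert ls T))"
  define B1 where "B1 = (\<Sum>T\<in>S. w T * P T)"
  define W1 where "W1 = (\<Sum>T\<in>S. w T)"
  have finA0: "finite A0" using assms(1) unfolding A0_def by simp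
  have finS: "finite S" using finA0 unfolding S_def by simp
  have lsA0: "ls \<notin> A0" unfolding A0_def by simp
  have nlA0: "\<forall>l\<in>A0. nl l \<ge> 4" using assms(3) unfolding A0_def by simp
  have pA0: "\<forall>l\<in>A0. 0.05 \<le> p l \<and> p l \<le> 1" using assms(4) unfolding A0_def by simp
  have p0: "0 \<le> p l \<and> p l \<le> 1" if "l \<in> A0" for l
  proof -
    have "0.05 \<le> p l" "p l \<le> 1" using pA0 that by auto
    then show ?thesis by auto
  qed
  have Nge: "N \<ge> 4" using assms(2,3) unfolding N_def by simp
  have pl: "0.05 \<le> pl" "pl \<le> 1" using assms(2,4) unfolding pl_def by auto
  have wpos: "w T > 0" if "T \<in> S" for T
  proof -
    have "\<forall>l\<in>A0. real (nl l) \<ge> 4" using nlA0 by simp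
    then have h1: "\<forall>l\<in>A0. 0 < 1 / real (nl l) \<and> 1 / real (nl l) < 1" by auto
    have "(\<Prod>l\<in>T. 1 / real (nl l)) > 0"
      by (rule prod_pos) (use h1 that in \<open>auto simp: S_def\<close>)
    moreover have "(\<Prod>l\<in>A0 - T. 1 - 1 / real (nl l)) > 0"
      by (rule prod_pos) (use h1 in \<open>auto\<close>)
    ultimately show ?thesis unfolding w_def exact_prob_def by simp
  qed
  have Pnn: "P T \<ge> 0" if "T \<in> S" for T
  proof -
    have "(\<Prod>l\<in>T. 1 - p l) \<le> 1"
      by (rule prod_le_1) (use p0 that in \<open>auto simp: S_def\<close>)
    then show ?thesis unfolding P_def Pun_def by simp
  qed
  have ins: "Pun p (insert ls T) = pl + (1 - pl) * P T" if "T \<in> S" for T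
  proof -
    have "finite T" "ls \<notin> T" using that finA0 lsA0 unfolding S_def by (auto intro: finite_subset)
    then show ?thesis unfolding Pun_def P_def pl_def by (simp add: algebra_simps)
  qed
  have AKe: "AK = pl * WK + (1 - pl) * BK"
  proof -
    have "AK = (\<Sum>T\<in>S. pl * (w T * K T) + (1 - pl) * (w T * P T * K T))"
      unfolding AK_def by (rule sum.cong) (auto simp: ins algebra_simps)
    then show ?thesis unfolding WK_def BK_def by (simp add: sum.distrib sum_distrib_left)
  qed
  have A1e: "A1 = pl * W1 + (1 - pl) * B1"
  proof -
    have "A1 = (\<Sum>T\<in>S. pl * w T + (1 - pl) * (w T * P T))"
      unfolding A1_def by (rule sum.cong) (auto simp: ins algebra_simps)
    then show ?thesis unfolding W1_def B1_def by (simp add: sum.distrib sum_distrib_left)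
  qed
  have opp: "\<forall>x\<in>S. \<forall>y\<in>S. (K x - K y) * (P x - P y) \<le> 0"
  proof (intro ballI)
    fix x y assume xy: "x \<in> S" "y \<in> S"
    have su: "\<forall>T\<subseteq>A0. \<forall>T'\<subseteq>A0. Pun p T \<le> Pun p T' \<longrightarrow> K T' \<le> K T"
      using assms(7) unfolding suitable_def A0_def by blast
    show "(K x - K y) * (P x - P y) \<le> 0"
    proof (cases "P x \<le> P y")
      case True
      then have "K y \<le> K x" using su xy unfolding S_def P_def by auto
      then show ?thesis using True by (intro mult_nonneg_nonpos) auto
    next
      case False
      then have "K x \<le> K y" using su xy unfolding S_def P_def by auto
      then show ?thesis using False by (intro mult_nonpos_nonneg) auto
    qed
  qed
  have ch: "W1 * BK \<le> WK * B1"
  proof -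
    have "W1 * (\<Sum>T\<in>S. w T * K T * P T) \<le> WK * B1"
      unfolding W1_def WK_def B1_def
      by (rule cheb[OF finS]) (use wpos opp in \<open>auto intro: less_imp_le\<close>)
    moreover have "(\<Sum>T\<in>S. w T * K T * P T) = BK" unfolding BK_def by (simp add: algebra_simps)
    ultimately show ?thesis by simp
  qed
  have key: "A1 * BK \<le> AK * B1"
  proof -
    have "AK * B1 - A1 * BK = pl * (WK * B1 - W1 * BK)" unfolding AKe A1e by (simp add: algebra_simps)
    moreover have "pl * (WK * B1 - W1 * BK) \<ge> 0" using pl ch by simp
    ultimately show ?thesis by simp
  qed
  have B1nn: "B1 \<ge> 0" unfolding B1_def using wpos Pnn by (intro sum_nonneg) (simp add: less_imp_le)
  have A1pos: "A1 > 0"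
  proof -
    have "{} \<in> S" unfolding S_def by simp
    have "\<forall>T\<in>S. 0 < w T * Pun p (insert ls T)"
    proof
      fix T assume T: "T \<in> S"
      have "Pun p (insert ls T) \<ge> pl" using ins[OF T] Pnn[OF T] pl by simp
      then show "0 < w T * Pun p (insert ls T)" using wpos[OF T] pl by simp
    qed
    then show ?thesis unfolding A1_def using finS \<open>{} \<in> S\<close> by (intro sum_pos) auto
  qed
  have npos: "n > 0"
  proof -
    have "(\<Prod>l\<in>Ls. nl l) > 0" using assms(3) by (intro prod_pos) force
    then show ?thesis using assms(6) by linarith
  qed
  have cpos: "c > 0" unfolding c_def using npos by simp
  have Npos: "N > 0" using Nge by simp
  have einK: "exp_ein n nl p Ls ls K i = c * (1/N)^2 * AK" for i
    unfolding exp_ein_def c_def N_def AK_def S_def w_def A0_def by simp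
  have eoutK: "exp_eout n nl p Ls ls K i = 2 * c * (1/N) * (1 - 1/N) * BK" for i
    unfolding exp_eout_def c_def N_def BK_def S_def w_def A0_def P_def by simp
  have ein1: "exp_ein n nl p Ls ls (\<lambda>_. 1) i = c * (1/N)^2 * A1" for i
    unfolding exp_ein_def c_def N_def A1_def S_def w_def A0_def by simp
  have eout1: "exp_eout n nl p Ls ls (\<lambda>_. 1) i = 2 * c * (1/N) * (1 - 1/N) * B1" for i
    unfolding exp_eout_def c_def N_def B1_def S_def w_def A0_def P_def by simp
  define eK where "eK = exp_edges n nl p Ls ls K"
  define e1 where "e1 = exp_edges n nl p Ls ls (\<lambda>_. 1)"
  have eKe: "eK = N * (c * (1/N)^2 * AK + 2 * c * (1/N) * (1 - 1/N) * BK / 2)"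
    unfolding eK_def exp_edges_def einK eoutK N_def by simp
  have e1e: "e1 = N * (c * (1/N)^2 * A1 + 2 * c * (1/N) * (1 - 1/N) * B1 / 2)"
    unfolding e1_def exp_edges_def ein1 eout1 N_def by simp
  have e1pos: "e1 > 0"
  proof -
    have "e1 = c / N * (A1 + (N - 1) * B1)"
    proof -
      have f1: "N * (c * (1/N)^2 * A1) = c / N * A1" using Npos by (simp add: power2_eq_square)
      have f2: "N * (2 * c * (1/N) * (1 - 1/N) * B1 / 2) = c / N * ((N - 1) * B1)"
        using Npos by (simp add: field_simps)
      show ?thesis unfolding e1e distrib_left f1 f2 by (rule refl)
    qed
    moreover have "A1 + (N - 1) * B1 > 0" using A1pos B1nn Nge by (simp add: add_pos_nonneg)
    ultimately show ?thesis using cpos Npos by simp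
  qed
  have QK: "modularity n nl p Ls ls K = N * (c * (1/N)^2 * AK / eK - ((2 * (c * (1/N)^2 * AK) + 2 * c * (1/N) * (1 - 1/N) * BK) / (2 * eK))^2)"
    unfolding modularity_def Let_def eK_def[symmetric] einK eoutK N_def by simp
  have Q1: "modularity n nl p Ls ls (\<lambda>_. 1) = N * (c * (1/N)^2 * A1 / e1 - ((2 * (c * (1/N)^2 * A1) + 2 * c * (1/N) * (1 - 1/N) * B1) / (2 * e1))^2)"
    unfolding modularity_def Let_def e1_def[symmetric] ein1 eout1 N_def by simp
  have mK: "modularity n nl p Ls ls K = AK / (AK + (N - 1) * BK) - 1 / N"
    and DK: "AK + (N - 1) * BK > 0"
  proof -
    have eKpos: "eK > 0" using assms(8) unfolding eK_def .
    note M = modform[OF cpos Npos refl refl eKe eKpos QK]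
    show "modularity n nl p Ls ls K = AK / (AK + (N - 1) * BK) - 1 / N" by (rule M(1))
    show "AK + (N - 1) * BK > 0" by (rule M(2))
  qed
  have m1: "modularity n nl p Ls ls (\<lambda>_. 1) = A1 / (A1 + (N - 1) * B1) - 1 / N"
    and D1: "A1 + (N - 1) * B1 > 0"
  proof -
    note M = modform[OF cpos Npos refl refl e1e e1pos Q1]
    show "modularity n nl p Ls ls (\<lambda>_. 1) = A1 / (A1 + (N - 1) * B1) - 1 / N" by (rule M(1))
    show "A1 + (N - 1) * B1 > 0" by (rule M(2))
  qed
  have "A1 / (A1 + (N - 1) * B1) \<le> AK / (AK + (N - 1) * BK)"
  proof -
    have "A1 * (AK + (N - 1) * BK) - AK * (A1 + (N - 1) * B1) = (N - 1) * (A1 * BK - AK * B1)"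
      by (simp add: algebra_simps)
    moreover have "(N - 1) * (A1 * BK - AK * B1) \<le> 0" using key Nge by (intro mult_nonneg_nonpos) auto
    ultimately have "A1 * (AK + (N - 1) * BK) \<le> AK * (A1 + (N - 1) * B1)" by simp
    then have le: "A1 * (AK + (N - 1) * BK) - AK * (A1 + (N - 1) * B1) \<le> 0" by simp
    show ?thesis
      apply (subst frac_le_eq)
        apply (use DK D1 in simp)
       apply (use DK D1 in simp)
      apply (rule divide_nonpos_pos[OF le])
      apply (rule mult_pos_pos[OF D1 DK])
      done
  qed
  then show ?thesis unfolding mK m1 by simp
qed

end
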